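(* Let $H(x|t)$ and $E(x|t)$ be the row-to-row transfer matrices defined in the context. Then for independent spectral parameters $x,x'$: $$H(x)H(x')=H(x')H(x),\qquad E(x)E(x')=E(x')E(x),\qquad H(x)E(x')=E(x')H(x).$$ In particular, the operators $Z_n(x_1,\dots,x_n|t)=H(x_n|t)\cdots H(x_1|t)$ and $Z'_k(x_1,\dots,x_k|t)=E(x_k|t)\cdots E(x_1|t)$ are symmetric in the $x$-variables.
   Context: $\beta$ indeterminate, $x\oplus y=x+y+\beta xy$, $x\ominus y=(x-y)/(1+\beta y)$. $V=\mathbb{Z}v_0\oplus\mathbb{Z}v_1$ with $\sigma^-v_1=v_0,\sigma^-v_0=0,\sigma^+v_0=v_1,\sigma^+v_1=0$. The quantum space is $\mathcal{V}=V^{\otimes N}$ (scalars extended to rational functions in $\beta,t_1,\dots,t_N$, spectral parameters, and formal power series in $q$). For an auxiliary copy $V(x)$ and the $j$-th tensor factor of $\mathcal{V}$ define $L_j(x)=\sum_{a,b}e_{ab}\otimes L_{ab}$ with $L_{00}=\sigma^+\sigma^-+(x\ominus t_j)\sigma^-\sigma^+$, $L_{01}=(1+\beta\,x\ominus t_j)\sigma^+$, $L_{10}=\sigma^-$, $L_{11}=\sigma^-\sigma^+$ (the $\sigma$'s acting on the $j$-th factor, $e_{ab}v_b=v_a$ the matrix units on $V(x)$), and $L'_j(x)$ with $L'_{00}=\sigma^-\sigma^++(x\oplus t_j)\sigma^+\sigma^-$, $L'_{01}=\sigma^+$, $L'_{10}=(1+\beta\,x\oplus t_j)\sigma^-$,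 $L'_{11}=\sigma^+\sigma^-$. The monodromy matrix is $M(x|t)=L_N(x)\cdots L_2(x)L_1(x)=\sum_{a,b}e_{ab}\otimes M_{ab}$ and $A=M_{00},B=M_{01},C=M_{10},D=M_{11}\in\mathrm{End}\,\mathcal{V}$; $A',B',C',D'$ are defined likewise from $L'$. The transfer matrices are $H(x|t)=A(x|t)+qD(x|t)$ and $E(x|t)=A'(x|t)+qD'(x|t)$. *)

theory Defs
  imports "HOL-Library.Multiset"
begin

text \<open>Basis of V: v0 is False, v1 is True. A basis state of the quantum space
  V tensor N is a bool list of length N (entry j-1 is the state of site j).
  An operator on the quantum space is given by its matrix coefficients:
  Op s' s is the coefficient of basis vector s' in Op(s).\<close>

type_synonym 'a qop = "bool list \<Rightarrow> bool list \<Rightarrow> 'a"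

definition oplus :: "'a::field \<Rightarrow> 'a \<Rightarrow> 'a \<Rightarrow> 'a" where
  "oplus \<beta> x y = x + y + \<beta> * x * y"

definition ominus :: "'a::field \<Rightarrow> 'a \<Rightarrow> 'a \<Rightarrow> 'a" where
  "ominus \<beta> x y = (x - y) / (1 + \<beta> * y)"

text \<open>Local L-operator L_j(x): Lloc beta x t a b s' s is the coefficient of
  v_{s'} in L_{ab} v_s (a b are auxiliary indices, t = t_j).\<close>
definition Lloc :: "'a::field \<Rightarrow> 'a \<Rightarrow> 'a \<Rightarrow> bool \<Rightarrow> bool \<Rightarrow> bool \<Rightarrow> bool \<Rightarrow> 'a" where
  "Lloc \<beta> x t a b s' s =
     (let xm = ominus \<beta> x t in
      if \<not> a \<and> \<not> b then (if s' = s then (if s then 1 else xm) else 0)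
      else if \<not> a \<and> b then (if s' \<and> \<not> s then 1 + \<beta> * xm else 0)
      else if a \<and> \<not> b then (if \<not> s' \<and> s then 1 else 0)
      else (if \<not> s' \<and> \<not> s then 1 else 0))"

definition Lloc' :: "'a::field \<Rightarrow> 'a \<Rightarrow> 'a \<Rightarrow> bool \<Rightarrow> bool \<Rightarrow> bool \<Rightarrow> bool \<Rightarrow> 'a" where
  "Lloc' \<beta> x t a b s' s =
     (let xp = oplus \<beta> x t in
      if \<not> a \<and> \<not> b then (if s' = s then (if s then xp else 1) else 0)
      else if \<not> a \<and> b then (if s' \<and> \<not> s then 1 else 0)
      else if a \<and> \<not> b then (if \<not> s' \<and> s then 1 + \<beta> * xp else 0)
      else (if s' \<and> s then 1 else 0))"

text \<open>Monodromy entries M_{ab} = (L_N ... L_1)_{ab}, for the list ts = [t_1,...,t_N].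
  Since L_1 acts first: M(t_1#rest)_{ab} = sum_c M(rest)_{ac} (L_1)_{cb}.\<close>
fun mono :: "('a::field \<Rightarrow> bool \<Rightarrow> bool \<Rightarrow> bool \<Rightarrow> bool \<Rightarrow> 'a)
             \<Rightarrow> 'a list \<Rightarrow> bool \<Rightarrow> bool \<Rightarrow> 'a qop" where
  "mono L [] a b [] [] = (if a = b then 1 else 0)"
| "mono L (t # ts) a b (s' # ss') (s # ss) =
     mono L ts a False ss' ss * L t False b s' s + mono L ts a True ss' ss * L t True b s' s"
| "mono L _ a b _ _ = 0"

definition opmul :: "nat \<Rightarrow> 'a::field qop \<Rightarrow> 'a qop \<Rightarrow> 'a qop" where
  "opmul N P Q = (\<lambda>s' s. \<Sum>u\<in>{u. length u = N}. P s' u * Q u s)"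

definition opid :: "nat \<Rightarrow> 'a::field qop" where
  "opid N = (\<lambda>s' s. if s' = s \<and> length s = N then 1 else 0)"

definition Hop :: "'a::field \<Rightarrow> 'a \<Rightarrow> 'a list \<Rightarrow> 'a \<Rightarrow> 'a qop" where
  "Hop \<beta> q ts x = (\<lambda>s' s. mono (Lloc \<beta> x) ts False False s' s + q * mono (Lloc \<beta> x) ts True True s' s)"

definition Eop :: "'a::field \<Rightarrow> 'a \<Rightarrow> 'a list \<Rightarrow> 'a \<Rightarrow> 'a qop" where
  "Eop \<beta> q ts x = (\<lambda>s' s. mono (Lloc' \<beta> x) ts False False s' s + q * mono (Lloc' \<beta> x) ts True True s' s)"

text \<open>Z_n(x_1..x_n|t) = H(x_n) ... H(x_1), with xs = [x_1,...,x_n]; likewise Z'.\<close>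
definition Zop :: "'a::field \<Rightarrow> 'a \<Rightarrow> 'a list \<Rightarrow> 'a list \<Rightarrow> 'a qop" where
  "Zop \<beta> q ts xs = fold (\<lambda>x P. opmul (length ts) (Hop \<beta> q ts x) P) xs (opid (length ts))"

definition Zop' :: "'a::field \<Rightarrow> 'a \<Rightarrow> 'a list \<Rightarrow> 'a list \<Rightarrow> 'a qop" where
  "Zop' \<beta> q ts xs = fold (\<lambda>x P. opmul (length ts) (Eop \<beta> q ts x) P) xs (opid (length ts))"

end

theory Submission
  imports Defs "HOL-Computational_Algebra.Polynomial"
begin

type_synonym 'r lop = "bool \<Rightarrow> bool \<Rightarrow> bool \<Rightarrow> bool \<Rightarrow> 'r"

definition LHs :: "'r::comm_ring_1 \<Rightarrow> 'r \<Rightarrow> 'r \<Rightarrow> 'r lop" where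
  "LHs \<beta> x t a b s' s =
      (if \<not> a \<and> \<not> b then (if s' = s then (if s then 1 + \<beta>*t else x - t) else 0)
      else if \<not> a \<and> b then (if s' \<and> \<not> s then 1 + \<beta> * x else 0)
      else if a \<and> \<not> b then (if \<not> s' \<and> s then 1 + \<beta>*t else 0)
      else (if \<not> s' \<and> \<not> s then 1 + \<beta>*t else 0))"

definition LEs :: "'r::comm_ring_1 \<Rightarrow> 'r \<Rightarrow> 'r \<Rightarrow> 'r lop" where
  "LEs \<beta> x t a b s' s =
     (let xp = x + t + \<beta>*x*t in
      if \<not> a \<and> \<not> b then (if s' = s then (if s then xp else 1) else 0)
      else if \<not> a \<and> b then (if s' \<and> \<not> s then 1 else 0)
      else if a \<and> \<not> b then (if \<not> s' \<and> s then 1 + \<beta> * xp else 0)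
      else (if s' \<and> s then 1 else 0))"

definition W :: "'r::comm_ring_1 lop \<Rightarrow> 'r lop \<Rightarrow> bool\<times>bool \<Rightarrow> bool\<times>bool \<Rightarrow> bool \<Rightarrow> bool \<Rightarrow> 'r" where
  "W L1 L2 a b s' s = (\<Sum>u\<in>UNIV. L1 (fst a) (fst b) s' u * L2 (snd a) (snd b) u s)"

definition locrel :: "(bool\<times>bool \<Rightarrow> bool\<times>bool \<Rightarrow> 'r::comm_ring_1) \<Rightarrow> 'r lop \<Rightarrow> 'r lop \<Rightarrow> bool" where
  "locrel R L1 L2 \<longleftrightarrow> (\<forall>a b s' s. (\<Sum>c\<in>UNIV. R a c * W L1 L2 c b s' s) = (\<Sum>c\<in>UNIV. W L2 L1 a c s' s * R c b))"

definition mk :: "'r::zero \<Rightarrow> 'r \<Rightarrow> 'r \<Rightarrow> 'r \<Rightarrow> 'r \<Rightarrow> 'r \<Rightarrow> bool\<times>bool \<Rightarrow> bool\<times>bool \<Rightarrow> 'r" where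
  "mk r0 r11 r12 r21 r22 r3 a c =
    (if a = (False,False) \<and> c = (False,False) then r0
     else if a = (False,True) \<and> c = (False,True) then r11
     else if a = (False,True) \<and> c = (True,False) then r12
     else if a = (True,False) \<and> c = (False,True) then r21
     else if a = (True,False) \<and> c = (True,False) then r22
     else if a = (True,True) \<and> c = (True,True) then r3 else 0)"

lemma UNIV_pair: "(UNIV::(bool\<times>bool) set) = {(False,False),(False,True),(True,False),(True,True)}"
  by auto

lemma sum_pair: "(\<Sum>c\<in>(UNIV::(bool\<times>bool) set). f c) = f (False,False) + f (False,True) + f (True,False) + f (True,True)"
  by (simp add: UNIV_pair algebra_simps)

lemma sum_bool: "(\<Sum>c\<in>(UNIV::bool set). f c) = f False + f True"
  by (simp add: UNIV_bool algebra_simps)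

lemma locrel_HH: "locrel (mk (1+\<beta>*x) (1+\<beta>*x') (x'-x) 0 (1+\<beta>*x) (1+\<beta>*x)) (LHs \<beta> x t) (LHs \<beta> x' t)"
  unfolding locrel_def
  apply (intro allI)
  apply (simp only: sum_pair W_def sum_bool)
  apply (simp add: mk_def LHs_def split: prod.splits)
  apply (auto simp: algebra_simps)
  done

lemma locrel_EE: "locrel (mk (1+\<beta>*x') (1+\<beta>*x) 0 (x-x') (1+\<beta>*x') (1+\<beta>*x')) (LEs \<beta> x t) (LEs \<beta> x' t)"
  unfolding locrel_def
  apply (intro allI)
  apply (simp only: sum_pair W_def sum_bool)
  apply (simp add: mk_def LEs_def Let_def split: prod.splits)
  apply (auto simp: algebra_simps)
  done

lemma locrel_HE: "locrel (mk (x+x'+\<beta>*x*x') 1 1 1 ((1+\<beta>*x)*(1+\<beta>*x')) 0) (LHs \<beta> x t) (LEs \<beta> x' t)"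
  unfolding locrel_def
  apply (intro allI)
  apply (simp only: sum_pair W_def sum_bool)
  apply (simp add: mk_def LEs_def LHs_def Let_def split: prod.splits)
  apply (auto simp: algebra_simps)
  done

lemma locrel_EH: "locrel (mk 0 0 0 0 0 1) (LEs \<beta> x' t) (LHs \<beta> x t)"
  unfolding locrel_def
  apply (intro allI)
  apply (simp only: sum_pair W_def sum_bool)
  apply (simp add: mk_def LEs_def LHs_def Let_def split: prod.splits)
  done

fun monoG :: "'r::comm_ring_1 lop list \<Rightarrow> bool \<Rightarrow> bool \<Rightarrow> bool list \<Rightarrow> bool list \<Rightarrow> 'r" where
  "monoG [] a b [] [] = (if a = b then 1 else 0)"
| "monoG (L # Ls) a b (s' # ss') (s # ss) =
     monoG Ls a False ss' ss * L False b s' s + monoG Ls a True ss' ss * L True b s' s"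
| "monoG _ a b _ _ = 0"

definition opmulG :: "nat \<Rightarrow> (bool list \<Rightarrow> bool list \<Rightarrow> 'r::comm_ring_1) \<Rightarrow> (bool list \<Rightarrow> bool list \<Rightarrow> 'r) \<Rightarrow> bool list \<Rightarrow> bool list \<Rightarrow> 'r" where
  "opmulG N P Q = (\<lambda>s' s. \<Sum>u\<in>{u. length u = N}. P s' u * Q u s)"

definition MM :: "'r::comm_ring_1 lop list \<Rightarrow> 'r lop list \<Rightarrow> bool\<times>bool \<Rightarrow> bool\<times>bool \<Rightarrow> bool list \<Rightarrow> bool list \<Rightarrow> 'r" where
  "MM Ls1 Ls2 a b s' s = (\<Sum>u\<in>{u. length u = length Ls1}. monoG Ls1 (fst a) (fst b) s' u * monoG Ls2 (snd a) (snd b) u s)"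

lemma finite_len: "finite {us::bool list. length us = n}"
  using finite_lists_length_eq[of "UNIV::bool set" n] by simp

lemma sum_len_Suc: "(\<Sum>u\<in>{u::bool list. length u = Suc n}. f u) = (\<Sum>v\<in>UNIV. \<Sum>us\<in>{us. length us = n}. f (v#us))"
proof -
  have e: "{u::bool list. length u = Suc n} = (\<lambda>(v,us). v#us) ` (UNIV \<times> {us. length us = n})"
    by (auto simp: image_def length_Suc_conv)
  have i: "inj_on (\<lambda>(v::bool,us). v#us) (UNIV \<times> {us. length us = n})"
    by (auto simp: inj_on_def)
  show ?thesis
    unfolding e sum.reindex[OF i] by (simp add: sum.cartesian_product split_beta)
qed

lemma sum_len_0: "(\<Sum>u\<in>{u::bool list. length u = 0}. f u) = f []"
  by simp

lemma MM_cons: "MM (L1#Ls1) (L2#Ls2) a b (x'#xs') (x#xs) = (\<Sum>c\<in>UNIV. MM Ls1 Ls2 a c xs' xs * W L1 L2 c b x' x)"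
  apply (simp add: MM_def sum_len_Suc sum_bool sum_pair W_def sum_distrib_right sum.distrib[symmetric])
  apply (rule sum.cong, simp)
  apply (simp add: algebra_simps)
  done

lemma MM_Nil: "MM [] [] a b s' s = (if s' = [] \<and> s = [] \<and> a = b then 1 else 0)"
  apply (cases a; cases b)
  apply (cases s'; cases s; auto simp: MM_def)
  done

lemma MM_Nil1: "MM (L1#Ls1) (L2#Ls2) a b [] s = 0"
  by (simp add: MM_def)
lemma MM_Nil2: "MM (L1#Ls1) (L2#Ls2) a b s' [] = 0"
proof -
  have "monoG (L2#Ls2) c d u [] = 0" for c d u by (cases u) auto
  then show ?thesis by (simp add: MM_def)
qed


lemma MM_rel:
  assumes "length Ls1 = length Ls2" "\<forall>i<length Ls1. locrel R (Ls1!i) (Ls2!i)"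
  shows "(\<Sum>c\<in>UNIV. R a c * MM Ls1 Ls2 c b s' s) = (\<Sum>c\<in>UNIV. MM Ls2 Ls1 a c s' s * R c b)"
  using assms
proof (induction Ls1 Ls2 arbitrary: a b s' s rule: list_induct2)
  case Nil
  have e1: "(\<lambda>c. R a c * MM [] [] c b s' s) = (\<lambda>c. if c = b then (if s' = [] \<and> s = [] then R a b else 0) else 0)"
    by (auto simp: MM_Nil)
  have e2: "(\<lambda>c. MM [] [] a c s' s * R c b) = (\<lambda>c. if c = a then (if s' = [] \<and> s = [] then R a b else 0) else 0)"
    by (auto simp: MM_Nil)
  show ?case by (simp only: e1 e2 sum.delta finite UNIV_I if_True)
next
  case (Cons L1 Ls1 L2 Ls2)
  have IH: "\<And>a b s' s. (\<Sum>c\<in>UNIV. R a c * MM Ls1 Ls2 c b s' s) = (\<Sum>c\<in>UNIV. MM Ls2 Ls1 a c s' s * R c b)"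
    using Cons by force
  have loc0: "locrel R L1 L2" using Cons.prems by force
  have loc: "\<And>a b s' s. (\<Sum>c\<in>UNIV. R a c * W L1 L2 c b s' s) = (\<Sum>c\<in>UNIV. W L2 L1 a c s' s * R c b)"
    using loc0 unfolding locrel_def by blast
  show ?case
  proof (cases s')
    case Nil then show ?thesis by (simp add: MM_Nil1)
  next
    case (Cons x' xs')
    show ?thesis
    proof (cases s)
      case Nil then show ?thesis by (simp add: MM_Nil2)
    next
      case (Cons x xs)
      have "(\<Sum>c\<in>UNIV. R a c * MM (L1#Ls1) (L2#Ls2) c b s' s)
          = (\<Sum>c\<in>UNIV. \<Sum>d\<in>UNIV. R a c * MM Ls1 Ls2 c d xs' xs * W L1 L2 d b x' x)"
        by (simp add: \<open>s' = _\<close> \<open>s = _\<close> MM_cons sum_distrib_left mult.assoc)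
      also have "\<dots> = (\<Sum>d\<in>UNIV. (\<Sum>c\<in>UNIV. R a c * MM Ls1 Ls2 c d xs' xs) * W L1 L2 d b x' x)"
        by (subst sum.swap) (simp add: sum_distrib_right)
      also have "\<dots> = (\<Sum>d\<in>UNIV. (\<Sum>e\<in>UNIV. MM Ls2 Ls1 a e xs' xs * R e d) * W L1 L2 d b x' x)"
        by (simp add: IH)
      also have "\<dots> = (\<Sum>d\<in>UNIV. \<Sum>e\<in>UNIV. MM Ls2 Ls1 a e xs' xs * (R e d * W L1 L2 d b x' x))"
        by (simp add: sum_distrib_right mult.assoc)
      also have "\<dots> = (\<Sum>e\<in>UNIV. \<Sum>d\<in>UNIV. MM Ls2 Ls1 a e xs' xs * (R e d * W L1 L2 d b x' x))"
        by (rule sum.swap)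
      also have "\<dots> = (\<Sum>e\<in>UNIV. MM Ls2 Ls1 a e xs' xs * (\<Sum>d\<in>UNIV. R e d * W L1 L2 d b x' x))"
        by (simp add: sum_distrib_left)
      also have "\<dots> = (\<Sum>e\<in>UNIV. MM Ls2 Ls1 a e xs' xs * (\<Sum>d\<in>UNIV. W L2 L1 e d x' x * R d b))"
        by (simp only: loc)
      also have "\<dots> = (\<Sum>e\<in>UNIV. \<Sum>d\<in>UNIV. MM Ls2 Ls1 a e xs' xs * W L2 L1 e d x' x * R d b)"
        by (simp add: sum_distrib_left mult.assoc)
      also have "\<dots> = (\<Sum>d\<in>UNIV. \<Sum>e\<in>UNIV. MM Ls2 Ls1 a e xs' xs * W L2 L1 e d x' x * R d b)"
        by (rule sum.swap)
      also have "\<dots> = (\<Sum>d\<in>UNIV. (\<Sum>e\<in>UNIV. MM Ls2 Ls1 a e xs' xs * W L2 L1 e d x' x) * R d b)"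
        by (simp add: sum_distrib_right)
      also have "\<dots> = (\<Sum>c\<in>UNIV. MM (L2#Ls2) (L1#Ls1) a c s' s * R c b)"
        by (simp add: \<open>s' = _\<close> \<open>s = _\<close> MM_cons)
      finally show ?thesis .
    qed
  qed
qed

definition gg :: "'r::comm_ring_1 \<Rightarrow> bool\<times>bool \<Rightarrow> 'r" where
  "gg q a = (if fst a then q else 1) * (if snd a then q else 1)"

definition TT :: "'r::comm_ring_1 \<Rightarrow> 'r lop list \<Rightarrow> bool list \<Rightarrow> bool list \<Rightarrow> 'r" where
  "TT q Ls s' s = monoG Ls False False s' s + q * monoG Ls True True s' s"

lemma trace_TT: "opmulG (length Ls1) (TT q Ls1) (TT q Ls2) s' s = (\<Sum>a\<in>UNIV. gg q a * MM Ls1 Ls2 a a s' s)"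
  apply (simp add: opmulG_def TT_def MM_def sum_pair gg_def sum_distrib_left sum.distrib[symmetric])
  apply (rule sum.cong, simp)
  apply (simp add: algebra_simps)
  done

lemma sum_if_eq: fixes f g :: "'i::finite \<Rightarrow> 'r::comm_ring_1" shows "(\<Sum>c\<in>(UNIV::'i::finite set). f c * (if c = b then g c else 0)) = f b * g b"
proof -
  have "(\<lambda>c. f c * (if c = b then g c else 0)) = (\<lambda>c. if c = b then f c * g c else 0)" by (rule ext) auto
  then show ?thesis by (simp only: ) (simp add: sum.delta)
qed

lemma trace_lemma:
  fixes R S m n :: "'i::finite \<Rightarrow> 'i \<Rightarrow> 'r::comm_ring_1"
  assumes rel: "\<And>a b. (\<Sum>c\<in>UNIV. R a c * m c b) = (\<Sum>c\<in>UNIV. n a c * R c b)"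
    and SR: "\<And>a b. (\<Sum>c\<in>UNIV. S a c * R c b) = (if a = b then k * P a else 0)"
    and RS: "\<And>a b. (\<Sum>c\<in>UNIV. R a c * S c b) = (if a = b then k * P a else 0)"
    and GR: "\<And>a b. G a * R a b = R a b * G b"
  shows "k * (\<Sum>a\<in>UNIV. G a * P a * m a a) = k * (\<Sum>a\<in>UNIV. G a * P a * n a a)"
proof -
  have "k * (\<Sum>a\<in>UNIV. G a * P a * n a a) = (\<Sum>a\<in>UNIV. G a * (\<Sum>b\<in>UNIV. n a b * (if b = a then k * P b else 0)))"
    by (simp add: sum_distrib_left algebra_simps if_distrib cong: if_cong)
  also have "\<dots> = (\<Sum>a\<in>UNIV. G a * (\<Sum>b\<in>UNIV. n a b * (\<Sum>c\<in>UNIV. R b c * S c a)))"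
    by (simp add: RS)
  also have "\<dots> = (\<Sum>a\<in>UNIV. G a * (\<Sum>c\<in>UNIV. (\<Sum>b\<in>UNIV. n a b * R b c) * S c a))"
    apply (rule sum.cong, simp)
    apply (simp add: sum_distrib_left sum_distrib_right mult.assoc)
    apply (subst sum.swap) apply simp
    done
  also have "\<dots> = (\<Sum>a\<in>UNIV. G a * (\<Sum>c\<in>UNIV. (\<Sum>b\<in>UNIV. R a b * m b c) * S c a))"
    by (simp add: rel)
  also have "\<dots> = (\<Sum>a\<in>UNIV. \<Sum>b\<in>UNIV. \<Sum>c\<in>UNIV. (G a * R a b) * m b c * S c a)"
    apply (rule sum.cong, simp)
    apply (simp add: sum_distrib_left sum_distrib_right mult.assoc)
    apply (subst sum.swap) apply simp
    done
  also have "\<dots> = (\<Sum>a\<in>UNIV. \<Sum>b\<in>UNIV. \<Sum>c\<in>UNIV. R a b * (G b * m b c * S c a))"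
    by (simp add: GR mult.assoc)
  also have "\<dots> = (\<Sum>b\<in>UNIV. \<Sum>a\<in>UNIV. \<Sum>c\<in>UNIV. R a b * (G b * m b c * S c a))"
    by (rule sum.swap)
  also have "\<dots> = (\<Sum>b\<in>UNIV. \<Sum>c\<in>UNIV. \<Sum>a\<in>UNIV. R a b * (G b * m b c * S c a))"
    by (rule sum.cong, simp, rule sum.swap)
  also have "\<dots> = (\<Sum>b\<in>UNIV. G b * (\<Sum>c\<in>UNIV. m b c * (\<Sum>a\<in>UNIV. S c a * R a b)))"
    by (simp add: sum_distrib_left algebra_simps)
  also have "\<dots> = (\<Sum>b\<in>UNIV. G b * (\<Sum>c\<in>UNIV. m b c * (if c = b then k * P c else 0)))"
    by (simp only: SR)
  also have "\<dots> = k * (\<Sum>a\<in>UNIV. G a * P a * m a a)"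
    by (simp only: sum_if_eq) (simp add: sum_distrib_left algebra_simps)
  finally show ?thesis by simp
qed


lemma comm_from:
  fixes R S :: "bool\<times>bool \<Rightarrow> bool\<times>bool \<Rightarrow> 'r::comm_ring_1"
  assumes loc: "\<forall>t\<in>set ts. locrel R (L1 t) (L2 t)"
    and SR: "\<And>a b. (\<Sum>c\<in>UNIV. S a c * R c b) = (if a = b then k * P a else 0)"
    and RS: "\<And>a b. (\<Sum>c\<in>UNIV. R a c * S c b) = (if a = b then k * P a else 0)"
    and GR: "\<And>a b. gg q a * R a b = R a b * gg q b"
  shows "k * (\<Sum>a\<in>UNIV. gg q a * P a * MM (map L1 ts) (map L2 ts) a a s' s)
       = k * (\<Sum>a\<in>UNIV. gg q a * P a * MM (map L2 ts) (map L1 ts) a a s' s)"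
proof -
  have rel: "\<And>a b. (\<Sum>c\<in>UNIV. R a c * MM (map L1 ts) (map L2 ts) c b s' s) = (\<Sum>c\<in>UNIV. MM (map L2 ts) (map L1 ts) a c s' s * R c b)"
    by (rule MM_rel) (use loc in auto)
  show ?thesis by (rule trace_lemma[OF rel SR RS GR])
qed

definition RHH :: "'r::comm_ring_1 \<Rightarrow> 'r \<Rightarrow> 'r \<Rightarrow> bool\<times>bool \<Rightarrow> bool\<times>bool \<Rightarrow> 'r" where "RHH \<beta> x x' = mk (1+\<beta>*x) (1+\<beta>*x') (x'-x) 0 (1+\<beta>*x) (1+\<beta>*x)"
definition SHH :: "'r::comm_ring_1 \<Rightarrow> 'r \<Rightarrow> 'r \<Rightarrow> bool\<times>bool \<Rightarrow> bool\<times>bool \<Rightarrow> 'r" where "SHH \<beta> x x' = mk (1+\<beta>*x') (1+\<beta>*x) (x-x') 0 (1+\<beta>*x') (1+\<beta>*x')"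
definition REE :: "'r::comm_ring_1 \<Rightarrow> 'r \<Rightarrow> 'r \<Rightarrow> bool\<times>bool \<Rightarrow> bool\<times>bool \<Rightarrow> 'r" where "REE \<beta> x x' = mk (1+\<beta>*x') (1+\<beta>*x) 0 (x-x') (1+\<beta>*x') (1+\<beta>*x')"
definition SEE :: "'r::comm_ring_1 \<Rightarrow> 'r \<Rightarrow> 'r \<Rightarrow> bool\<times>bool \<Rightarrow> bool\<times>bool \<Rightarrow> 'r" where "SEE \<beta> x x' = mk (1+\<beta>*x) (1+\<beta>*x') 0 (x'-x) (1+\<beta>*x) (1+\<beta>*x)"
definition RHE :: "'r::comm_ring_1 \<Rightarrow> 'r \<Rightarrow> 'r \<Rightarrow> bool\<times>bool \<Rightarrow> bool\<times>bool \<Rightarrow> 'r" where "RHE \<beta> x x' = mk (x+x'+\<beta>*x*x') 1 1 1 ((1+\<beta>*x)*(1+\<beta>*x')) 0"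
definition SHE :: "'r::comm_ring_1 \<Rightarrow> 'r \<Rightarrow> 'r \<Rightarrow> bool\<times>bool \<Rightarrow> bool\<times>bool \<Rightarrow> 'r" where "SHE \<beta> x x' = (let r0 = x+x'+\<beta>*x*x'; P = (1+\<beta>*x)*(1+\<beta>*x') in mk (P - 1) (r0*P) (-r0) (-r0) r0 0)"
definition REH :: "bool\<times>bool \<Rightarrow> bool\<times>bool \<Rightarrow> 'r::comm_ring_1" where "REH = mk 0 0 0 0 0 1"
definition P1 :: "bool\<times>bool \<Rightarrow> 'r::comm_ring_1" where "P1 a = (if a = (True,True) then 0 else 1)"
definition P2 :: "bool\<times>bool \<Rightarrow> 'r::comm_ring_1" where "P2 a = (if a = (True,True) then 1 else 0)"

lemma all_pair: "(\<forall>a::bool\<times>bool. Q a) \<longleftrightarrow> Q (False,False) \<and> Q (False,True) \<and> Q (True,False) \<and> Q (True,True)"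
  by (metis (full_types) prod.exhaust)

lemma mk_GR: "gg q a * mk r0 r11 r12 r21 r22 r3 a b = mk r0 r11 r12 r21 r22 r3 a b * gg q b"
  by (cases a; cases b) (auto simp: mk_def gg_def)

lemma SR_HH: "(\<Sum>c\<in>UNIV. SHH \<beta> x x' a c * RHH \<beta> x x' c b) = (if a = b then ((1+\<beta>*x)*(1+\<beta>*x')) * 1 else 0)"
  by (cases a; cases b) (auto simp: sum_pair mk_def SHH_def RHH_def algebra_simps)
lemma RS_HH: "(\<Sum>c\<in>UNIV. RHH \<beta> x x' a c * SHH \<beta> x x' c b) = (if a = b then ((1+\<beta>*x)*(1+\<beta>*x')) * 1 else 0)"
  by (cases a; cases b) (auto simp: sum_pair mk_def SHH_def RHH_def algebra_simps)
lemma SR_EE: "(\<Sum>c\<in>UNIV. SEE \<beta> x x' a c * REE \<beta> x x' c b) = (if a = b then ((1+\<beta>*x)*(1+\<beta>*x')) * 1 else 0)"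
  by (cases a; cases b) (auto simp: sum_pair mk_def SEE_def REE_def algebra_simps)
lemma RS_EE: "(\<Sum>c\<in>UNIV. REE \<beta> x x' a c * SEE \<beta> x x' c b) = (if a = b then ((1+\<beta>*x)*(1+\<beta>*x')) * 1 else 0)"
  by (cases a; cases b) (auto simp: sum_pair mk_def SEE_def REE_def algebra_simps)
lemma SR_HE: "(\<Sum>c\<in>UNIV. SHE \<beta> x x' a c * RHE \<beta> x x' c b) = (if a = b then ((x+x'+\<beta>*x*x')*((1+\<beta>*x)*(1+\<beta>*x') - 1)) * P1 a else 0)"
  by (cases a; cases b) (auto simp: sum_pair mk_def SHE_def RHE_def P1_def Let_def algebra_simps)
lemma RS_HE: "(\<Sum>c\<in>UNIV. RHE \<beta> x x' a c * SHE \<beta> x x' c b) = (if a = b then ((x+x'+\<beta>*x*x')*((1+\<beta>*x)*(1+\<beta>*x') - 1)) * P1 a else 0)"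
  by (cases a; cases b) (auto simp: sum_pair mk_def SHE_def RHE_def P1_def Let_def algebra_simps)
lemma SR_EH: "(\<Sum>c\<in>UNIV. REH a c * REH c b) = (if a = b then 1 * P2 a else (0::'r::comm_ring_1))"
  by (cases a; cases b) (auto simp: sum_pair mk_def REH_def P2_def)


definition HGs :: "'r::comm_ring_1 \<Rightarrow> 'r \<Rightarrow> 'r list \<Rightarrow> 'r \<Rightarrow> bool list \<Rightarrow> bool list \<Rightarrow> 'r" where
  "HGs \<beta> q ts x = TT q (map (LHs \<beta> x) ts)"
definition EGs :: "'r::comm_ring_1 \<Rightarrow> 'r \<Rightarrow> 'r list \<Rightarrow> 'r \<Rightarrow> bool list \<Rightarrow> bool list \<Rightarrow> 'r" where
  "EGs \<beta> q ts x = TT q (map (LEs \<beta> x) ts)"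

lemma gen_HH: "((1+\<beta>*x)*(1+\<beta>*x')) * opmulG (length ts) (HGs \<beta> q ts x) (HGs \<beta> q ts x') s' s
   = ((1+\<beta>*x)*(1+\<beta>*x')) * opmulG (length ts) (HGs \<beta> q ts x') (HGs \<beta> q ts x) s' s"
proof -
  have loc: "\<forall>t\<in>set ts. locrel (RHH \<beta> x x') (LHs \<beta> x t) (LHs \<beta> x' t)"
    using locrel_HH unfolding RHH_def by blast
  have GR: "\<And>a b. gg q a * RHH \<beta> x x' a b = RHH \<beta> x x' a b * gg q b"
    unfolding RHH_def by (rule mk_GR)
  have "((1+\<beta>*x)*(1+\<beta>*x')) * (\<Sum>a\<in>UNIV. gg q a * 1 * MM (map (LHs \<beta> x) ts) (map (LHs \<beta> x') ts) a a s' s)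
       = ((1+\<beta>*x)*(1+\<beta>*x')) * (\<Sum>a\<in>UNIV. gg q a * 1 * MM (map (LHs \<beta> x') ts) (map (LHs \<beta> x) ts) a a s' s)"
    by (rule comm_from[OF loc SR_HH RS_HH GR])
  then show ?thesis
    using trace_TT[of "map (LHs \<beta> x) ts" q "map (LHs \<beta> x') ts" s' s]
          trace_TT[of "map (LHs \<beta> x') ts" q "map (LHs \<beta> x) ts" s' s]
    by (simp add: HGs_def)
qed

lemma gen_EE: "((1+\<beta>*x)*(1+\<beta>*x')) * opmulG (length ts) (EGs \<beta> q ts x) (EGs \<beta> q ts x') s' s
   = ((1+\<beta>*x)*(1+\<beta>*x')) * opmulG (length ts) (EGs \<beta> q ts x') (EGs \<beta> q ts x) s' s"
proof -
  have loc: "\<forall>t\<in>set ts. locrel (REE \<beta> x x') (LEs \<beta> x t) (LEs \<beta> x' t)"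
    using locrel_EE unfolding REE_def by blast
  have GR: "\<And>a b. gg q a * REE \<beta> x x' a b = REE \<beta> x x' a b * gg q b"
    unfolding REE_def by (rule mk_GR)
  have "((1+\<beta>*x)*(1+\<beta>*x')) * (\<Sum>a\<in>UNIV. gg q a * 1 * MM (map (LEs \<beta> x) ts) (map (LEs \<beta> x') ts) a a s' s)
       = ((1+\<beta>*x)*(1+\<beta>*x')) * (\<Sum>a\<in>UNIV. gg q a * 1 * MM (map (LEs \<beta> x') ts) (map (LEs \<beta> x) ts) a a s' s)"
    by (rule comm_from[OF loc SR_EE RS_EE GR])
  then show ?thesis
    using trace_TT[of "map (LEs \<beta> x) ts" q "map (LEs \<beta> x') ts" s' s]
          trace_TT[of "map (LEs \<beta> x') ts" q "map (LEs \<beta> x) ts" s' s]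
    by (simp add: EGs_def)
qed

lemma gen_HE: fixes \<beta> x x' q :: "'r::comm_ring_1" shows "((x+x'+\<beta>*x*x')*((1+\<beta>*x)*(1+\<beta>*x') - 1)) * opmulG (length ts) (HGs \<beta> q ts x) (EGs \<beta> q ts x') s' s
   = ((x+x'+\<beta>*x*x')*((1+\<beta>*x)*(1+\<beta>*x') - 1)) * opmulG (length ts) (EGs \<beta> q ts x') (HGs \<beta> q ts x) s' s"
  (is "?k * _ = ?k * _")
proof -
  define A where "A = map (LHs \<beta> x) ts"
  define B where "B = map (LEs \<beta> x') ts"
  have loc: "\<forall>t\<in>set ts. locrel (RHE \<beta> x x') (LHs \<beta> x t) (LEs \<beta> x' t)"
    using locrel_HE unfolding RHE_def by blast
  have GR: "\<And>a b. gg q a * RHE \<beta> x x' a b = RHE \<beta> x x' a b * gg q b"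
    unfolding RHE_def by (rule mk_GR)
  have e1: "?k * (\<Sum>a\<in>UNIV. gg q a * P1 a * MM A B a a s' s) = ?k * (\<Sum>a\<in>UNIV. gg q a * P1 a * MM B A a a s' s)"
    unfolding A_def B_def by (rule comm_from[OF loc SR_HE RS_HE GR])
  have loc2: "\<forall>t\<in>set ts. locrel REH (LEs \<beta> x' t) (LHs \<beta> x t)"
    using locrel_EH unfolding REH_def by blast
  have GR2: "\<And>a b. gg q a * REH a b = REH a b * gg q b"
    unfolding REH_def by (rule mk_GR)
  have e2: "1 * (\<Sum>a\<in>UNIV. gg q a * P2 a * MM B A a a s' s) = 1 * (\<Sum>a\<in>UNIV. gg q a * P2 a * MM A B a a s' s)"
    unfolding A_def B_def by (rule comm_from[OF loc2 SR_EH SR_EH GR2])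
  have split: "\<And>C D. (\<Sum>a\<in>UNIV. gg q a * MM C D a a s' s) = (\<Sum>a\<in>UNIV. gg q a * P1 a * MM C D a a s' s) + (\<Sum>a\<in>UNIV. gg q a * P2 a * MM C D a a s' s)"
    by (simp add: sum.distrib[symmetric] P1_def P2_def algebra_simps) (rule sum.cong, auto)
  have "?k * (\<Sum>a\<in>UNIV. gg q a * MM A B a a s' s) = ?k * (\<Sum>a\<in>UNIV. gg q a * MM B A a a s' s)"
  proof -
    have gen: "\<And>k X1 X2 Y1 Y2::'r. k*X1 = k*Y1 \<Longrightarrow> X2 = Y2 \<Longrightarrow> k*(X1+X2) = k*(Y1+Y2)"
      by (simp add: distrib_left)
    have e2': "(\<Sum>a\<in>UNIV. gg q a * P2 a * MM A B a a s' s) = (\<Sum>a\<in>UNIV. gg q a * P2 a * MM B A a a s' s)"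
      using e2 by simp
    show ?thesis unfolding split by (rule gen[OF e1 e2'])
  qed
  moreover have "length A = length ts" "length B = length ts" by (simp_all add: A_def B_def)
  ultimately show ?thesis
    using trace_TT[of A q B s' s] trace_TT[of B q A s' s]
    by (simp add: HGs_def EGs_def A_def B_def)
qed


definition rhom :: "('r::comm_ring_1 \<Rightarrow> 's::comm_ring_1) \<Rightarrow> bool" where
  "rhom h \<longleftrightarrow> (\<forall>a b. h (a+b) = h a + h b) \<and> (\<forall>a b. h (a*b) = h a * h b) \<and> h 1 = 1"

lemma rhom_simps:
  assumes "rhom h"
  shows "h (a+b) = h a + h b" "h (a*b) = h a * h b" "h 1 = 1" "h 0 = 0" "h (-a) = - h a" "h (a - b) = h a - h b"
proof -
  have add: "\<And>a b. h (a+b) = h a + h b" using assms by (auto simp: rhom_def)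
  show "h (a+b) = h a + h b" "h (a*b) = h a * h b" "h 1 = 1" using assms by (auto simp: rhom_def)
  have "h 0 = h (0+0)" by simp
  also have "\<dots> = h 0 + h 0" by (rule add)
  finally show Z: "h 0 = 0" by simp
  have neg: "\<And>c. h (-c) = - h c"
  proof -
    fix c
    have "h (-c) + h c = 0" using Z add[of "-c" c] by simp
    then show "h (-c) = - h c" by (simp add: eq_neg_iff_add_eq_0)
  qed
  show "h (-a) = - h a" by (rule neg)
  show "h (a - b) = h a - h b" by (metis add neg diff_conv_add_uminus)
qed

lemma rhom_sum: "rhom h \<Longrightarrow> h (sum f A) = sum (\<lambda>x. h (f x)) A"
  by (induction A rule: infinite_finite_induct) (simp_all add: rhom_simps)

lemma rhom_LHs: "rhom h \<Longrightarrow> h (LHs \<beta> x t a b s' s) = LHs (h \<beta>) (h x) (h t) a b s' s"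
  by (simp add: LHs_def rhom_simps)

lemma rhom_LEs: "rhom h \<Longrightarrow> h (LEs \<beta> x t a b s' s) = LEs (h \<beta>) (h x) (h t) a b s' s"
  by (simp add: LEs_def Let_def rhom_simps)

lemma rhom_monoG: "rhom h \<Longrightarrow> h (monoG Ls a b s' s) = monoG (map (\<lambda>L a b s' s. h (L a b s' s)) Ls) a b s' s"
  by (induction Ls a b s' s rule: monoG.induct) (simp_all add: rhom_simps)

lemma rhom_HGs: "rhom h \<Longrightarrow> h (HGs \<beta> q ts x s' s) = HGs (h \<beta>) (h q) (map h ts) (h x) s' s"
  by (simp add: HGs_def TT_def rhom_simps rhom_monoG comp_def rhom_LHs)

lemma rhom_EGs: "rhom h \<Longrightarrow> h (EGs \<beta> q ts x s' s) = EGs (h \<beta>) (h q) (map h ts) (h x) s' s"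
  by (simp add: EGs_def TT_def rhom_simps rhom_monoG comp_def rhom_LEs)

lemma rhom_opmulG: "rhom h \<Longrightarrow> h (opmulG N P Q s' s) = opmulG N (\<lambda>s' s. h (P s' s)) (\<lambda>s' s. h (Q s' s)) s' s"
  by (simp add: opmulG_def rhom_sum rhom_simps)

definition ev :: "'a::comm_ring_1 \<Rightarrow> 'a \<Rightarrow> 'a \<Rightarrow> 'a poly poly poly \<Rightarrow> 'a" where
  "ev b x y P = poly (poly (poly P [:[:y:]:]) [:x:]) b"

lemma rhom_ev: "rhom (ev b x y)"
  by (simp add: rhom_def ev_def)

definition Cst :: "'a::comm_ring_1 \<Rightarrow> 'a poly poly poly" where "Cst c = [:[:[:c:]:]:]"
definition VB :: "'a::comm_ring_1 poly poly poly" where "VB = [:[:[:0,1:]:]:]"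
definition VX :: "'a::comm_ring_1 poly poly poly" where "VX = [:[:0,1:]:]"
definition VY :: "'a::comm_ring_1 poly poly poly" where "VY = [:0,1:]"

lemma ev_simps: "ev b x y (Cst c) = c" "ev b x y VB = b" "ev b x y VX = x" "ev b x y VY = y"
  by (simp_all add: ev_def Cst_def VB_def VX_def VY_def)

lemma ev_Cst_map: "map (ev b x y) (map Cst ts) = ts"
  by (induction ts) (simp_all add: ev_simps)

lemma ev_Cst_comp: "map (ev b x y \<circ> Cst) ts = ts"
  by (induction ts) (simp_all add: ev_simps)

lemma nz_by_ev: "ev b x y P \<noteq> 0 \<Longrightarrow> P \<noteq> 0"
  using rhom_simps(4)[OF rhom_ev] by auto

lemma spec_HH:
  fixes \<beta> q x x' :: "'a::field"
  shows "opmulG (length ts) (HGs \<beta> q ts x) (HGs \<beta> q ts x') s' s = opmulG (length ts) (HGs \<beta> q ts x') (HGs \<beta> q ts x) s' s"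
proof -
  let ?B = "VB :: 'a poly poly poly" and ?Q = "Cst q" and ?T = "map Cst ts"
  have "((1+?B*VX)*(1+?B*VY)) * opmulG (length ?T) (HGs ?B ?Q ?T VX) (HGs ?B ?Q ?T VY) s' s
      = ((1+?B*VX)*(1+?B*VY)) * opmulG (length ?T) (HGs ?B ?Q ?T VY) (HGs ?B ?Q ?T VX) s' s"
    by (rule gen_HH)
  moreover have "(1+?B*VX)*(1+?B*VY) \<noteq> 0"
    by (rule nz_by_ev[where b=0 and x=0 and y=0]) (simp add: rhom_simps[OF rhom_ev] ev_simps)
  ultimately have "opmulG (length ?T) (HGs ?B ?Q ?T VX) (HGs ?B ?Q ?T VY) s' s
      = opmulG (length ?T) (HGs ?B ?Q ?T VY) (HGs ?B ?Q ?T VX) s' s" by simp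
  then have "ev \<beta> x x' (opmulG (length ?T) (HGs ?B ?Q ?T VX) (HGs ?B ?Q ?T VY) s' s)
      = ev \<beta> x x' (opmulG (length ?T) (HGs ?B ?Q ?T VY) (HGs ?B ?Q ?T VX) s' s)" by simp
  then show ?thesis
    by (simp add: rhom_opmulG[OF rhom_ev] rhom_HGs[OF rhom_ev] ev_simps ev_Cst_map ev_Cst_comp)
qed

lemma spec_EE:
  fixes \<beta> q x x' :: "'a::field"
  shows "opmulG (length ts) (EGs \<beta> q ts x) (EGs \<beta> q ts x') s' s = opmulG (length ts) (EGs \<beta> q ts x') (EGs \<beta> q ts x) s' s"
proof -
  let ?B = "VB :: 'a poly poly poly" and ?Q = "Cst q" and ?T = "map Cst ts"
  have "((1+?B*VX)*(1+?B*VY)) * opmulG (length ?T) (EGs ?B ?Q ?T VX) (EGs ?B ?Q ?T VY) s' s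
      = ((1+?B*VX)*(1+?B*VY)) * opmulG (length ?T) (EGs ?B ?Q ?T VY) (EGs ?B ?Q ?T VX) s' s"
    by (rule gen_EE)
  moreover have "(1+?B*VX)*(1+?B*VY) \<noteq> 0"
    by (rule nz_by_ev[where b=0 and x=0 and y=0]) (simp add: rhom_simps[OF rhom_ev] ev_simps)
  ultimately have "opmulG (length ?T) (EGs ?B ?Q ?T VX) (EGs ?B ?Q ?T VY) s' s
      = opmulG (length ?T) (EGs ?B ?Q ?T VY) (EGs ?B ?Q ?T VX) s' s" by simp
  then have "ev \<beta> x x' (opmulG (length ?T) (EGs ?B ?Q ?T VX) (EGs ?B ?Q ?T VY) s' s)
      = ev \<beta> x x' (opmulG (length ?T) (EGs ?B ?Q ?T VY) (EGs ?B ?Q ?T VX) s' s)" by simp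
  then show ?thesis
    by (simp add: rhom_opmulG[OF rhom_ev] rhom_EGs[OF rhom_ev] ev_simps ev_Cst_map ev_Cst_comp)
qed

lemma spec_HE:
  fixes \<beta> q x x' :: "'a::field"
  shows "opmulG (length ts) (HGs \<beta> q ts x) (EGs \<beta> q ts x') s' s = opmulG (length ts) (EGs \<beta> q ts x') (HGs \<beta> q ts x) s' s"
proof -
  let ?B = "VB :: 'a poly poly poly" and ?Q = "Cst q" and ?T = "map Cst ts"
  let ?k = "(VX+VY+?B*VX*VY)*((1+?B*VX)*(1+?B*VY) - 1)"
  have "?k * opmulG (length ?T) (HGs ?B ?Q ?T VX) (EGs ?B ?Q ?T VY) s' s
      = ?k * opmulG (length ?T) (EGs ?B ?Q ?T VY) (HGs ?B ?Q ?T VX) s' s"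
    by (rule gen_HE)
  moreover have "?k \<noteq> 0"
    by (rule nz_by_ev[where b=1 and x=1 and y=0]) (simp add: rhom_simps[OF rhom_ev] ev_simps)
  ultimately have "opmulG (length ?T) (HGs ?B ?Q ?T VX) (EGs ?B ?Q ?T VY) s' s
      = opmulG (length ?T) (EGs ?B ?Q ?T VY) (HGs ?B ?Q ?T VX) s' s" by simp
  then have "ev \<beta> x x' (opmulG (length ?T) (HGs ?B ?Q ?T VX) (EGs ?B ?Q ?T VY) s' s)
      = ev \<beta> x x' (opmulG (length ?T) (EGs ?B ?Q ?T VY) (HGs ?B ?Q ?T VX) s' s)" by simp
  then show ?thesis
    by (simp add: rhom_opmulG[OF rhom_ev] rhom_HGs[OF rhom_ev] rhom_EGs[OF rhom_ev] ev_simps ev_Cst_map ev_Cst_comp)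
qed


lemma Lloc_LHs:
  fixes \<beta> x t :: "'a::field"
  assumes nz: "1 + \<beta>*t \<noteq> 0"
  shows "Lloc \<beta> x t a b s' s * (1+\<beta>*t) = LHs \<beta> x t a b s' s"
proof -
  have d: "(x-t)/(1+\<beta>*t)*(1+\<beta>*t) = x - t" using nz by simp
  have "(1+\<beta>*((x-t)/(1+\<beta>*t)))*(1+\<beta>*t) = (1+\<beta>*t) + \<beta>*((x-t)/(1+\<beta>*t)*(1+\<beta>*t))"
    by (simp add: algebra_simps)
  also have "\<dots> = 1+\<beta>*x" by (simp only: d) (simp add: algebra_simps)
  finally have e: "(1+\<beta>*((x-t)/(1+\<beta>*t)))*(1+\<beta>*t) = 1+\<beta>*x" .
  show ?thesis using nz by (auto simp: Lloc_def LHs_def ominus_def Let_def d e[simplified])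
qed

lemma Lloc'_LEs: "Lloc' \<beta> x t a b s' s = LEs \<beta> x t a b s' s"
  by (simp add: Lloc'_def LEs_def oplus_def Let_def)

lemma mono_H:
  fixes \<beta> x :: "'a::field"
  assumes "\<forall>t\<in>set ts. 1 + \<beta>*t \<noteq> 0"
  shows "mono (Lloc \<beta> x) ts a b s' s * prod_list (map (\<lambda>t. 1+\<beta>*t) ts) = monoG (map (LHs \<beta> x) ts) a b s' s"
  using assms
proof (induction ts arbitrary: a b s' s)
  case Nil
  then show ?case by (cases s'; cases s) auto
next
  case (Cons t ts)
  show ?case
  proof (cases s')
    case Nil then show ?thesis by simp
  next
    case (Cons y ys)
    show ?thesis
    proof (cases s)
      case Nil then show ?thesis using \<open>s' = _\<close> by simp
    next
      case (Cons z zs)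
      have IH: "\<And>a b. mono (Lloc \<beta> x) ts a b ys zs * prod_list (map (\<lambda>t. 1+\<beta>*t) ts) = monoG (map (LHs \<beta> x) ts) a b ys zs"
        using Cons.IH Cons.prems by simp
      have t: "1 + \<beta>*t \<noteq> 0" using Cons.prems by simp
      let ?P = "prod_list (map (\<lambda>t. 1+\<beta>*t) ts)"
      have "monoG (map (LHs \<beta> x) (t#ts)) a b s' s
          = (mono (Lloc \<beta> x) ts a False ys zs * ?P) * (Lloc \<beta> x t False b y z * (1+\<beta>*t))
          + (mono (Lloc \<beta> x) ts a True ys zs * ?P) * (Lloc \<beta> x t True b y z * (1+\<beta>*t))"
        by (simp only: \<open>s' = _\<close> \<open>s = _\<close> list.map monoG.simps IH Lloc_LHs[OF t])
      also have "\<dots> = mono (Lloc \<beta> x) (t#ts) a b s' s * prod_list (map (\<lambda>t. 1+\<beta>*t) (t#ts))"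
        by (simp only: \<open>s' = _\<close> \<open>s = _\<close> list.map mono.simps prod_list.Cons) (simp add: algebra_simps)
      finally show ?thesis by simp
    qed
  qed
qed

lemma mono_E: "mono (Lloc' \<beta> x) ts a b s' s = monoG (map (LEs \<beta> x) ts) a b s' s"
  by (induction "Lloc' \<beta> x" ts a b s' s rule: mono.induct) (simp_all add: Lloc'_LEs)

lemma opmul_G: "opmul N P Q = opmulG N P Q"
  by (simp add: opmul_def opmulG_def)

lemma Hop_HGs:
  fixes \<beta> x :: "'a::field"
  assumes "\<forall>t\<in>set ts. 1 + \<beta>*t \<noteq> 0"
  shows "Hop \<beta> q ts x s' s * prod_list (map (\<lambda>t. 1+\<beta>*t) ts) = HGs \<beta> q ts x s' s"
  using mono_H[OF assms] by (simp add: Hop_def HGs_def TT_def algebra_simps)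

lemma Eop_EGs: "Eop \<beta> q ts x = EGs \<beta> q ts x"
  by (simp add: Eop_def EGs_def TT_def mono_E fun_eq_iff)

lemma opmul_assoc: "opmul N (opmul N A B) C = opmul N A (opmul N B C)"
proof (intro ext)
  fix s' s
  have "opmul N (opmul N A B) C s' s = (\<Sum>u\<in>{u. length u = N}. \<Sum>v\<in>{u. length u = N}. A s' v * B v u * C u s)"
    by (simp add: opmul_def sum_distrib_right)
  also have "\<dots> = (\<Sum>v\<in>{u. length u = N}. \<Sum>u\<in>{u. length u = N}. A s' v * B v u * C u s)"
    by (rule sum.swap)
  also have "\<dots> = opmul N A (opmul N B C) s' s"
    by (simp add: opmul_def sum_distrib_left mult.assoc)
  finally show "opmul N (opmul N A B) C s' s = opmul N A (opmul N B C) s' s" .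
qed

lemma fold_sym:
  assumes comm: "\<And>x y. opmul N (F x) (F y) = opmul N (F y) (F x)"
    and "mset xs = mset ys"
  shows "fold (\<lambda>x P. opmul N (F x) P) xs I = fold (\<lambda>x P. opmul N (F x) P) ys I"
proof -
  have "fold (\<lambda>x P. opmul N (F x) P) xs = fold (\<lambda>x P. opmul N (F x) P) ys"
  proof (rule fold_multiset_equiv)
    fix x y
    show "(\<lambda>P. opmul N (F x) P) \<circ> (\<lambda>P. opmul N (F y) P) = (\<lambda>P. opmul N (F y) P) \<circ> (\<lambda>P. opmul N (F x) P)"
      by (rule ext) (simp add: opmul_assoc[symmetric] comm)
  qed (rule assms(2))
  then show ?thesis by simp
qed


lemma HH_comm:
  fixes \<beta> q x y :: "'a::field"
  assumes A: "\<forall>t\<in>set ts. 1 + \<beta>*t \<noteq> 0"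
  shows "opmul (length ts) (Hop \<beta> q ts x) (Hop \<beta> q ts y) = opmul (length ts) (Hop \<beta> q ts y) (Hop \<beta> q ts x)"
proof (intro ext)
  fix s' s
  let ?P = "prod_list (map (\<lambda>t. 1+\<beta>*t) ts)"
  have P: "?P \<noteq> 0" using A by (auto simp: prod_list_zero_iff)
  have e: "\<And>x y. opmul (length ts) (Hop \<beta> q ts x) (Hop \<beta> q ts y) s' s * (?P * ?P) = opmulG (length ts) (HGs \<beta> q ts x) (HGs \<beta> q ts y) s' s"
    by (simp only: opmul_def opmulG_def Hop_HGs[OF A, symmetric] Eop_EGs sum_distrib_right) (rule sum.cong; simp add: algebra_simps)
  have "opmul (length ts) (Hop \<beta> q ts x) (Hop \<beta> q ts y) s' s * (?P * ?P) = opmul (length ts) (Hop \<beta> q ts y) (Hop \<beta> q ts x) s' s * (?P * ?P)"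
    by (simp only: e spec_HH)
  then show "opmul (length ts) (Hop \<beta> q ts x) (Hop \<beta> q ts y) s' s = opmul (length ts) (Hop \<beta> q ts y) (Hop \<beta> q ts x) s' s"
    using P by simp
qed

lemma EE_comm:
  fixes \<beta> q x y :: "'a::field"
  shows "opmul (length ts) (Eop \<beta> q ts x) (Eop \<beta> q ts y) = opmul (length ts) (Eop \<beta> q ts y) (Eop \<beta> q ts x)"
  by (intro ext) (simp add: opmul_G Eop_EGs spec_EE)

lemma HE_comm:
  fixes \<beta> q x y :: "'a::field"
  assumes A: "\<forall>t\<in>set ts. 1 + \<beta>*t \<noteq> 0"
  shows "opmul (length ts) (Hop \<beta> q ts x) (Eop \<beta> q ts y) = opmul (length ts) (Eop \<beta> q ts y) (Hop \<beta> q ts x)"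
proof (intro ext)
  fix s' s
  let ?P = "prod_list (map (\<lambda>t. 1+\<beta>*t) ts)"
  have P: "?P \<noteq> 0" using A by (auto simp: prod_list_zero_iff)
  have e1: "opmul (length ts) (Hop \<beta> q ts x) (Eop \<beta> q ts y) s' s * ?P = opmulG (length ts) (HGs \<beta> q ts x) (EGs \<beta> q ts y) s' s"
    by (simp only: opmul_def opmulG_def Hop_HGs[OF A, symmetric] Eop_EGs sum_distrib_right) (rule sum.cong; simp add: algebra_simps)
  have e2: "opmul (length ts) (Eop \<beta> q ts y) (Hop \<beta> q ts x) s' s * ?P = opmulG (length ts) (EGs \<beta> q ts y) (HGs \<beta> q ts x) s' s"
    by (simp only: opmul_def opmulG_def Hop_HGs[OF A, symmetric] Eop_EGs sum_distrib_right) (rule sum.cong; simp add: algebra_simps)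
  have "opmul (length ts) (Hop \<beta> q ts x) (Eop \<beta> q ts y) s' s * ?P = opmul (length ts) (Eop \<beta> q ts y) (Hop \<beta> q ts x) s' s * ?P"
    by (simp only: e1 e2 spec_HE)
  then show "opmul (length ts) (Hop \<beta> q ts x) (Eop \<beta> q ts y) s' s = opmul (length ts) (Eop \<beta> q ts y) (Hop \<beta> q ts x) s' s"
    using P by simp
qed

theorem mainTheorem4:
  fixes \<beta> q x x' :: "'a::field" and ts :: "'a list"
  assumes "\<forall>t\<in>set ts. 1 + \<beta> * t \<noteq> 0"
  shows "opmul (length ts) (Hop \<beta> q ts x) (Hop \<beta> q ts x') = opmul (length ts) (Hop \<beta> q ts x') (Hop \<beta> q ts x)
       \<and> opmul (length ts) (Eop \<beta> q ts x) (Eop \<beta> q ts x') = opmul (length ts) (Eop \<beta> q ts x') (Eop \<beta> q ts x)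
       \<and> opmul (length ts) (Hop \<beta> q ts x) (Eop \<beta> q ts x') = opmul (length ts) (Eop \<beta> q ts x') (Hop \<beta> q ts x)
       \<and> (\<forall>xs ys. mset xs = mset ys \<longrightarrow> Zop \<beta> q ts xs = Zop \<beta> q ts ys)
       \<and> (\<forall>xs ys. mset xs = mset ys \<longrightarrow> Zop' \<beta> q ts xs = Zop' \<beta> q ts ys)"
proof (intro conjI allI impI)
  show "opmul (length ts) (Hop \<beta> q ts x) (Hop \<beta> q ts x') = opmul (length ts) (Hop \<beta> q ts x') (Hop \<beta> q ts x)"
    by (rule HH_comm[OF assms])
  show "opmul (length ts) (Eop \<beta> q ts x) (Eop \<beta> q ts x') = opmul (length ts) (Eop \<beta> q ts x') (Eop \<beta> q ts x)"
    by (rule EE_comm)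
  show "opmul (length ts) (Hop \<beta> q ts x) (Eop \<beta> q ts x') = opmul (length ts) (Eop \<beta> q ts x') (Hop \<beta> q ts x)"
    by (rule HE_comm[OF assms])
  fix xs ys :: "'a list"
  assume m: "mset xs = mset ys"
  show "Zop \<beta> q ts xs = Zop \<beta> q ts ys"
    unfolding Zop_def by (rule fold_sym[OF HH_comm[OF assms] m])
  show "Zop' \<beta> q ts xs = Zop' \<beta> q ts ys"
    unfolding Zop'_def by (rule fold_sym[OF EE_comm m])
qed

end
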